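(* Let $n\ge2$ and let $P\in\mathrm{Mat}(n^2,\mathbb{C})$ be an orthogonal projection ($P^*=P$, $P^2=P$) of rank $r$. Put $P_1=P\otimes I_n$, $P_2=I_n\otimes P$, $t_m=\operatorname{tr}_3\big((P_1P_2)^m\big)$ and $F[P]=(rn-t_1)(t_2-t_3)-(t_1-t_2)^2$. (a) If there is a real number $Q>0$ such that $Q^2(P_1P_2P_1-P_2P_1P_2)=P_1-P_2$, then $F[P]=0$. (b) If $F[P]=0$ and $P_1P_2\neq P_2P_1$, then $Q^2(P_1P_2P_1-P_2P_1P_2)=P_1-P_2$ holds with $Q>0$ given by $$Q^2=\frac{rn-t_1}{t_1-t_2}.$$
   Context: $I_n$ is the $n\times n$ identity matrix, $\otimes$ is the Kronecker product, $P^*$ is the conjugate transpose, and $\operatorname{tr}_3$ is the matrix trace on $\mathrm{Mat}(n^3,\mathbb{C})$. *)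

theory Defs
  imports "Jordan_Normal_Form.Schur_Decomposition" "Jordan_Normal_Form.DL_Rank"
begin

definition kron :: "'a::times mat \<Rightarrow> 'a mat \<Rightarrow> 'a mat" where
  "kron A B = mat (dim_row A * dim_row B) (dim_col A * dim_col B)
     (\<lambda>(i,j). A $$ (i div dim_row B, j div dim_col B) * B $$ (i mod dim_row B, j mod dim_col B))"


definition mat_trace :: "'a::comm_monoid_add mat \<Rightarrow> 'a" where
  "mat_trace A = (\<Sum>i<dim_row A. A $$ (i,i))"

end

theory Submission
  imports Defs
begin

lemma sum_split_prod: "(\<Sum>k<b*d. f k) = (\<Sum>i<b. \<Sum>j<d. f (i*d+j::nat) :: 'a::comm_monoid_add)"
proof (induction b)
  case 0 then show ?case by simp
next
  case (Suc b)
  have "{..<Suc b * d} = {..<b*d} \<union> {b*d..<b*d+d}" by auto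
  then have "(\<Sum>k<Suc b*d. f k) = (\<Sum>k<b*d. f k) + (\<Sum>k\<in>{b*d..<b*d+d}. f k)"
    by (simp add: sum.union_disjoint ivl_disj_int)
  also have "(\<Sum>k\<in>{b*d..<b*d+d}. f k) = (\<Sum>j<d. f (b*d+j))"
    by (rule sum.reindex_bij_witness[of _ "\<lambda>j. b*d+j" "\<lambda>k. k - b*d"]) auto
  finally show ?case using Suc by simp
qed

lemma kron_carrier: "kron A B \<in> carrier_mat (dim_row A * dim_row B) (dim_col A * dim_col B)"
  unfolding kron_def by simp

lemma kron_dims[simp]: "dim_row (kron A B) = dim_row A * dim_row B" "dim_col (kron A B) = dim_col A * dim_col B"
  unfolding kron_def by simp_all

lemma kron_index[simp]: "i < dim_row A * dim_row B \<Longrightarrow> j < dim_col A * dim_col B \<Longrightarrow>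
  kron A B $$ (i,j) = A $$ (i div dim_row B, j div dim_col B) * B $$ (i mod dim_row B, j mod dim_col B)"
  unfolding kron_def by simp

lemma div_mod_lt: "i < a * (c::nat) \<Longrightarrow> i div c < a \<and> i mod c < c"
  by (metis less_mult_imp_div_less mod_less_divisor mult_0_right not_gr_zero not_less0 mult.commute)

lemma kron_mult:
  fixes A B C D :: "'a::comm_semiring_0 mat"
  assumes A: "A \<in> carrier_mat a b" and B: "B \<in> carrier_mat c d"
    and C: "C \<in> carrier_mat b e" and D: "D \<in> carrier_mat d f"
  shows "kron A B * kron C D = kron (A * C) (B * D)"
proof (rule eq_matI)
  fix i j assume i: "i < dim_row (kron (A * C) (B * D))" and j: "j < dim_col (kron (A * C) (B * D))"
  have i': "i < a * c" and j': "j < e * f" using i j A B C D by auto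
  have ic: "i div c < a" "i mod c < c" using div_mod_lt[OF i'] by auto
  have jf: "j div f < e" "j mod f < f" using div_mod_lt[OF j'] by auto
  have "(kron A B * kron C D) $$ (i,j) = (\<Sum>k<b*d. kron A B $$ (i,k) * kron C D $$ (k,j))"
    using i' j' A B C D by (simp add: scalar_prod_def lessThan_atLeast0)
  also have "\<dots> = (\<Sum>k1<b. \<Sum>k2<d. kron A B $$ (i,k1*d+k2) * kron C D $$ (k1*d+k2,j))"
    by (rule sum_split_prod)
  also have "\<dots> = (\<Sum>k1<b. \<Sum>k2<d. (A $$ (i div c, k1) * C $$ (k1, j div f)) * (B $$ (i mod c, k2) * D $$ (k2, j mod f)))"
  proof (intro sum.cong refl)
    fix k1 k2 assume k1: "k1 \<in> {..<b}" and k2: "k2 \<in> {..<d}"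
    have lt: "k1*d+k2 < b*d" using k1 k2
      by (metis lessThan_iff add.commute add_less_cancel_left less_le_trans mult_le_mono1 mult_Suc Suc_leI)
    have dv: "(k1*d+k2) div d = k1" "(k1*d+k2) mod d = k2" using k2 by auto
    show "kron A B $$ (i,k1*d+k2) * kron C D $$ (k1*d+k2,j) =
      (A $$ (i div c, k1) * C $$ (k1, j div f)) * (B $$ (i mod c, k2) * D $$ (k2, j mod f))"
      using i' j' lt A B C D dv by (simp add: ac_simps)
  qed
  also have "\<dots> = (\<Sum>k1<b. A $$ (i div c, k1) * C $$ (k1, j div f)) * (\<Sum>k2<d. B $$ (i mod c, k2) * D $$ (k2, j mod f))"
    by (simp add: sum_product)
  also have "\<dots> = kron (A * C) (B * D) $$ (i,j)"
    using i' j' ic jf A B C D by (simp add: scalar_prod_def lessThan_atLeast0)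
  finally show "(kron A B * kron C D) $$ (i,j) = kron (A * C) (B * D) $$ (i,j)" .
qed (use A B C D in auto)

lemma trace_kron:
  fixes A B :: "'a::comm_semiring_0 mat"
  assumes A: "A \<in> carrier_mat a a" and B: "B \<in> carrier_mat c c"
  shows "mat_trace (kron A B) = mat_trace A * mat_trace B"
proof -
  have "mat_trace (kron A B) = (\<Sum>k<a*c. kron A B $$ (k,k))" using A B by (simp add: mat_trace_def)
  also have "\<dots> = (\<Sum>k1<a. \<Sum>k2<c. kron A B $$ (k1*c+k2,k1*c+k2))" by (rule sum_split_prod)
  also have "\<dots> = (\<Sum>k1<a. \<Sum>k2<c. A $$ (k1,k1) * B $$ (k2,k2))"
  proof (intro sum.cong refl)
    fix k1 k2 assume k1: "k1 \<in> {..<a}" and k2: "k2 \<in> {..<c}"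
    have lt: "k1*c+k2 < a*c" using k1 k2
      by (metis lessThan_iff add.commute add_less_cancel_left less_le_trans mult_le_mono1 mult_Suc Suc_leI)
    have dv: "(k1*c+k2) div c = k1" "(k1*c+k2) mod c = k2" using k2 by auto
    show "kron A B $$ (k1*c+k2,k1*c+k2) = A $$ (k1,k1) * B $$ (k2,k2)" using lt dv A B by simp
  qed
  also have "\<dots> = mat_trace A * mat_trace B" using A B by (simp add: mat_trace_def sum_product)
  finally show ?thesis .
qed


lemma trace_comm:
  fixes A B :: "'a::comm_ring mat"
  assumes A: "A \<in> carrier_mat m k" and B: "B \<in> carrier_mat k m"
  shows "mat_trace (A * B) = mat_trace (B * A)"
proof -
  have "mat_trace (A * B) = (\<Sum>i<m. \<Sum>j<k. A $$ (i,j) * B $$ (j,i))"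
    using A B by (simp add: mat_trace_def scalar_prod_def lessThan_atLeast0)
  also have "\<dots> = (\<Sum>j<k. \<Sum>i<m. B $$ (j,i) * A $$ (i,j))"
    by (subst sum.swap) (simp add: mult.commute)
  also have "\<dots> = mat_trace (B * A)"
    using A B by (simp add: mat_trace_def scalar_prod_def lessThan_atLeast0)
  finally show ?thesis .
qed

lemma tr_prod_minus:
  fixes X1 X2 Y1 Y2 :: "'a::comm_ring mat"
  assumes "X1 \<in> carrier_mat N N" "X2 \<in> carrier_mat N N" "Y1 \<in> carrier_mat N N" "Y2 \<in> carrier_mat N N"
  shows "mat_trace ((X1 - X2) * (Y1 - Y2)) = mat_trace (X1*Y1) - mat_trace (X1*Y2) - mat_trace (X2*Y1) + mat_trace (X2*Y2)"
  using assms by (simp add: mat_trace_def scalar_prod_def algebra_simps sum_subtractf sum.distrib)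

lemma tr_mult_minus:
  fixes X Y1 Y2 :: "'a::comm_ring mat"
  assumes "X \<in> carrier_mat N N" "Y1 \<in> carrier_mat N N" "Y2 \<in> carrier_mat N N"
  shows "mat_trace (X * (Y1 - Y2)) = mat_trace (X*Y1) - mat_trace (X*Y2)"
  using assms by (simp add: mat_trace_def scalar_prod_def algebra_simps sum_subtractf sum.distrib)

lemma tr_smult_left:
  fixes X Y :: "'a::comm_ring mat"
  assumes "X \<in> carrier_mat N N" "Y \<in> carrier_mat N N"
  shows "mat_trace ((c \<cdot>\<^sub>m X) * Y) = c * mat_trace (X*Y)"
  using assms by (simp add: mat_trace_def scalar_prod_def algebra_simps sum_distrib_left)

lemma tr_smult_right:
  fixes X Y :: "'a::comm_ring mat"
  assumes "X \<in> carrier_mat N N" "Y \<in> carrier_mat N N"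
  shows "mat_trace (X * (c \<cdot>\<^sub>m Y)) = c * mat_trace (X*Y)"
  using assms by (simp add: mat_trace_def scalar_prod_def algebra_simps sum_distrib_left)

definition hadj :: "complex mat \<Rightarrow> complex mat" where
  "hadj Y = mat (dim_col Y) (dim_row Y) (\<lambda>(i,j). cnj (Y $$ (j,i)))"

lemma hadj_carrier[simp]: "Y \<in> carrier_mat m p \<Longrightarrow> hadj Y \<in> carrier_mat p m"
  unfolding hadj_def by auto

lemma mat_adjoint_hadj: "mat_adjoint Y = hadj Y"
  unfolding mat_adjoint_def hadj_def
  by (rule eq_matI) (auto simp: mat_of_rows_def cols_def)

lemma hadj_mult:
  assumes A: "A \<in> carrier_mat m k" and B: "B \<in> carrier_mat k p"
  shows "hadj (A * B) = hadj B * hadj A"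
  by (rule eq_matI) (use A B in \<open>auto simp: hadj_def scalar_prod_def mult.commute\<close>)

lemma hadj_minus:
  assumes A: "A \<in> carrier_mat m k" and B: "B \<in> carrier_mat m k"
  shows "hadj (A - B) = hadj A - hadj B"
  by (rule eq_matI) (use A B in \<open>auto simp: hadj_def\<close>)

lemma hadj_smult_real:
  assumes A: "A \<in> carrier_mat m k"
  shows "hadj (complex_of_real q \<cdot>\<^sub>m A) = complex_of_real q \<cdot>\<^sub>m hadj A"
  by (rule eq_matI) (use A in \<open>auto simp: hadj_def\<close>)

lemma frob:
  assumes Y: "Y \<in> carrier_mat m p"
  shows "\<exists>r\<ge>0. mat_trace (hadj Y * Y) = complex_of_real r \<and> (r = 0 \<longrightarrow> Y = 0\<^sub>m m p)"
proof -
  define r where "r = (\<Sum>i<p. \<Sum>j<m. (cmod (Y $$ (j,i)))^2)"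
  have "mat_trace (hadj Y * Y) = (\<Sum>i<p. \<Sum>j<m. cnj (Y $$ (j,i)) * Y $$ (j,i))"
    using Y by (simp add: mat_trace_def scalar_prod_def hadj_def lessThan_atLeast0)
  also have "\<dots> = complex_of_real r"
    unfolding r_def by (simp add: complex_norm_square[symmetric] mult.commute del: of_real_power)
  finally have tr: "mat_trace (hadj Y * Y) = complex_of_real r" .
  have r0: "r \<ge> 0" unfolding r_def by (intro sum_nonneg) auto
  have "Y = 0\<^sub>m m p" if "r = 0"
  proof (rule eq_matI)
    fix j i assume j: "j < dim_row (0\<^sub>m m p :: complex mat)" and i: "i < dim_col (0\<^sub>m m p :: complex mat)"
    have "(\<Sum>j<m. (cmod (Y $$ (j,i)))^2) = 0"
      using that i unfolding r_def
      by (subst (asm) sum_nonneg_eq_0_iff) (auto intro: sum_nonneg)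
    then have "(cmod (Y $$ (j,i)))^2 = 0"
      using j by (subst (asm) sum_nonneg_eq_0_iff) auto
    then show "Y $$ (j,i) = 0\<^sub>m m p $$ (j,i)" using i j by simp
  qed (use Y in auto)
  then show ?thesis using tr r0 by blast
qed


lemma trace_one: "mat_trace (1\<^sub>m k :: 'a::{comm_ring_1} mat) = of_nat k"
  by (simp add: mat_trace_def)

lemma rank_idem_trace:
  fixes P :: "'a::field mat"
  assumes P: "P \<in> carrier_mat m m" and idem: "P * P = P"
  shows "of_nat (vec_space.rank m P) = mat_trace P"
proof -
  interpret vec_space "TYPE('a)" m .
  have colsP: "set (cols P) \<subseteq> carrier_vec m" using P cols_dim by blast
  have li0: "lin_indpt {}"
    by (rule finite_lin_indpt2) auto
  obtain S where finS: "finite S" and maxS: "maximal S (\<lambda>T. T \<subseteq> set (cols P) \<and> lin_indpt T)"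
    using maximal_exists_superset[of "set (cols P)" "(\<lambda>T. T \<subseteq> set (cols P) \<and> lin_indpt T)" "{}"] li0
    by auto
  have SP: "S \<subseteq> set (cols P)" and liS: "lin_indpt S" using maxS unfolding maximal_def by auto
  have Sc: "S \<subseteq> carrier_vec m" using SP colsP by auto
  have rk: "rank P = card S" by (rule rank_card_indpt[OF P maxS])
  obtain ws where dws: "distinct ws" and sws: "set ws = S" using finite_distinct_list[OF finS] by auto
  define k where "k = length ws"
  have kS: "k = card S" unfolding k_def using dws sws distinct_card by fastforce
  define C where "C = mat_of_cols m ws"
  have C: "C \<in> carrier_mat m k" unfolding C_def k_def by simp
  have colsC: "cols C = ws" unfolding C_def using Sc sws by simp
  have inj: "x = y" if "x \<in> carrier_vec k" "y \<in> carrier_vec k" "C *\<^sub>v x = C *\<^sub>v y" for x y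
  proof (rule ccontr)
    assume "x \<noteq> y"
    have ne: "x - y \<noteq> 0\<^sub>v k"
    proof
      assume z: "x - y = 0\<^sub>v k"
      have "x = y"
      proof (rule eq_vecI)
        fix i assume i: "i < dim_vec y"
        then have "(x - y) $ i = 0" using z that by simp
        then show "x $ i = y $ i" using that i by simp
      qed (use that in simp)
      then show False using \<open>x \<noteq> y\<close> by simp
    qed
    have "C *\<^sub>v (x - y) = 0\<^sub>v m" using that C by (simp add: mult_minus_distrib_mat_vec)
    then have "lin_dep (set (cols C))"
      using lin_depI[OF C _ ne] that colsC dws by auto
    then show False using liS colsC sws by simp
  qed
  have inspan: "\<exists>x \<in> carrier_vec k. C *\<^sub>v x = col P l" if l: "l < m" for l
  proof -
    have cl: "col P l \<in> carrier_vec m" using P l by auto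
    have "col P l \<in> span S"
    proof (cases "col P l \<in> S")
      case True then show ?thesis using span_mem Sc by auto
    next
      case False
      have "insert (col P l) S \<subseteq> set (cols P)" using SP l P by (auto simp: cols_def)
      moreover have "insert (col P l) S \<noteq> S" using False by auto
      ultimately have "\<not> lin_indpt (insert (col P l) S)" using maxS unfolding maximal_def by blast
      then show ?thesis using lin_dep_iff_in_span[OF Sc liS cl False] by auto
    qed
    then obtain a where a: "a \<in> S \<rightarrow> carrier class_ring" and la: "lincomb a S = col P l"
      using finite_in_span[OF finS Sc] by auto
    have "C *\<^sub>v vec k (\<lambda>i. a (col C i)) = lincomb a (set (cols C))"
      using mat_mult_eq_lincomb[OF C] colsC dws by auto
    then show ?thesis using la colsC sws by (intro bexI[of _ "vec k (\<lambda>i. a (col C i))"]) auto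
  qed
  then obtain xs where xs: "\<And>l. l < m \<Longrightarrow> xs l \<in> carrier_vec k \<and> C *\<^sub>v xs l = col P l"
    by metis
  define \<alpha> where "\<alpha> = mat k m (\<lambda>(i,l). xs l $ i)"
  have al: "\<alpha> \<in> carrier_mat k m" unfolding \<alpha>_def by simp
  have colal: "col \<alpha> l = xs l" if "l < m" for l
    using xs[OF that] that unfolding \<alpha>_def by (auto intro!: eq_vecI)
  have CA: "C * \<alpha> = P"
  proof (rule mat_col_eqI)
    fix l assume "l < dim_col P"
    then have l: "l < m" using P by simp
    have "col (C * \<alpha>) l = C *\<^sub>v col \<alpha> l" by (rule col_mult2[OF C al l])
    also have "\<dots> = col P l" using colal[OF l] xs[OF l] by simp
    finally show "col (C * \<alpha>) l = col P l" .
  qed (use C al P in auto)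
  have ACA: "\<alpha> * C * \<alpha> = \<alpha>"
  proof (rule mat_col_eqI)
    fix l assume l: "l < dim_col \<alpha>"
    then have l': "l < m" using al by auto
    have X: "\<alpha> * C * \<alpha> \<in> carrier_mat k m" using C al by simp
    have "C *\<^sub>v col (\<alpha> * C * \<alpha>) l = col (C * (\<alpha> * C * \<alpha>)) l" using col_mult2[OF C X l'] by simp
    also have "C * (\<alpha> * C * \<alpha>) = (C * \<alpha>) * (C * \<alpha>)" using assoc_mult_mat[OF al C al] assoc_mult_mat[OF C al mult_carrier_mat[OF C al]] by simp
    also have "\<dots> = C * \<alpha>" using CA idem by simp
    also have "col (C * \<alpha>) l = C *\<^sub>v col \<alpha> l" by (rule col_mult2[OF C al l'])
    finally show "col (\<alpha> * C * \<alpha>) l = col \<alpha> l"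
      using inj[of "col (\<alpha> * C * \<alpha>) l" "col \<alpha> l"] C al l' by auto
  qed (use al C in auto)
  have AC: "\<alpha> * C = 1\<^sub>m k"
  proof (rule mat_col_eqI)
    fix i assume i: "i < dim_col (1\<^sub>m k :: 'a mat)"
    then have i': "i < k" by simp
    have "ws ! i \<in> set (cols P)" using SP sws i' k_def by auto
    then obtain l where l: "l < m" and wl: "col P l = ws ! i" using P by (auto simp: cols_def in_set_conv_nth)
    have colCi: "col C i = ws ! i" using colsC i' C by (metis cols_nth carrier_matD(2))
    have "C *\<^sub>v unit_vec k i = col C i" using col_mult2[OF C one_carrier_mat i'] C i' by simp
    then have "C *\<^sub>v xs l = C *\<^sub>v unit_vec k i" using xs[OF l] wl colCi by simp
    then have xl: "xs l = unit_vec k i" using inj xs[OF l] i' by auto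
    have "col (\<alpha> * C) i = \<alpha> *\<^sub>v col C i" by (rule col_mult2[OF al C i'])
    also have "\<dots> = \<alpha> *\<^sub>v (C *\<^sub>v xs l)" using xs[OF l] wl colCi by simp
    also have "\<dots> = (\<alpha> * C) *\<^sub>v xs l" using assoc_mult_mat_vec[OF al C, of "xs l"] xs[OF l] by simp
    also have "\<dots> = col (\<alpha> * C * \<alpha>) l" using col_mult2[OF mult_carrier_mat[OF al C] al l] colal[OF l] by simp
    also have "\<dots> = col \<alpha> l" using ACA by simp
    finally show "col (\<alpha> * C) i = col (1\<^sub>m k) i" using colal[OF l] xl i' by simp
  qed (use al C in auto)
  have "mat_trace P = mat_trace (\<alpha> * C)" using CA trace_comm[OF C al] by simp
  also have "\<dots> = of_nat k" using AC trace_one by simp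
  finally show ?thesis using rk kS by simp
qed


lemma mat_minus_eq0:
  fixes X Y :: "'a::ab_group_add mat"
  assumes "X \<in> carrier_mat m p" "Y \<in> carrier_mat m p" "X - Y = 0\<^sub>m m p"
  shows "X = Y"
proof (rule eq_matI)
  fix i j assume ij: "i < dim_row Y" "j < dim_col Y"
  have "X $$ (i,j) - Y $$ (i,j) = (X - Y) $$ (i,j)" using assms(1,2) ij by simp
  also have "\<dots> = 0" using assms(3) assms(2) ij by simp
  finally show "X $$ (i,j) = Y $$ (i,j)" by simp
qed (use assms in auto)

locale twop =
  fixes N :: nat and A B :: "complex mat"
  assumes A[simp]: "A \<in> carrier_mat N N" and B[simp]: "B \<in> carrier_mat N N"
    and AA[simp]: "A * A = A" and BB[simp]: "B * B = B"
    and hA[simp]: "hadj A = A" and hB[simp]: "hadj B = B"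
begin

lemma cl[simp]: "X \<in> carrier_mat N N \<Longrightarrow> Y \<in> carrier_mat N N \<Longrightarrow> X * Y \<in> carrier_mat N N"
  by simp

lemma clm[simp]: "X \<in> carrier_mat N N \<Longrightarrow> Y \<in> carrier_mat N N \<Longrightarrow> X - Y \<in> carrier_mat N N"
  by (rule minus_carrier_mat)
lemma cls[simp]: "X \<in> carrier_mat N N \<Longrightarrow> c \<cdot>\<^sub>m X \<in> carrier_mat N N"
  by simp

lemma as[simp]: "X \<in> carrier_mat N N \<Longrightarrow> Y \<in> carrier_mat N N \<Longrightarrow> Z \<in> carrier_mat N N \<Longrightarrow> X * Y * Z = X * (Y * Z)"
  by (rule assoc_mult_mat)

lemma AAX[simp]: "X \<in> carrier_mat N N \<Longrightarrow> A * (A * X) = A * X"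
  by (metis as A AA)
lemma BBX[simp]: "X \<in> carrier_mat N N \<Longrightarrow> B * (B * X) = B * X"
  by (metis as B BB)

lemma hadj_m[simp]: "X \<in> carrier_mat N N \<Longrightarrow> Y \<in> carrier_mat N N \<Longrightarrow> hadj (X * Y) = hadj Y * hadj X"
  by (rule hadj_mult)
lemma hadj_mi[simp]: "X \<in> carrier_mat N N \<Longrightarrow> Y \<in> carrier_mat N N \<Longrightarrow> hadj (X - Y) = hadj X - hadj Y"
  by (rule hadj_minus)

definition "t1 = mat_trace (A * B)"
definition "t2 = mat_trace (A * (B * (A * B)))"
definition "t3 = mat_trace (A * (B * (A * (B * (A * B)))))"
definition "a = mat_trace A"

lemma w_AB[simp]: "mat_trace (A * B) = t1" by (simp add: t1_def)
lemma w_ABAB[simp]: "mat_trace (A * (B * (A * B))) = t2" by (simp add: t2_def)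
lemma w_ABABAB[simp]: "mat_trace (A * (B * (A * (B * (A * B))))) = t3" by (simp add: t3_def)
lemma w_A[simp]: "mat_trace A = a" by (simp add: a_def)

lemma tc: "(X :: complex mat) \<in> carrier_mat N N \<Longrightarrow> Y \<in> carrier_mat N N \<Longrightarrow> mat_trace (X * Y) = mat_trace (Y * X)"
  using trace_comm[of X N N Y] by simp

lemma d1[simp]: "(X :: complex mat) \<in> carrier_mat N N \<Longrightarrow> Y1 \<in> carrier_mat N N \<Longrightarrow> Y2 \<in> carrier_mat N N \<Longrightarrow>
  X * (Y1 - Y2) = X * Y1 - X * Y2"
  by (rule mult_minus_distrib_mat)
lemma d2[simp]: "(X1 :: complex mat) \<in> carrier_mat N N \<Longrightarrow> X2 \<in> carrier_mat N N \<Longrightarrow> Y \<in> carrier_mat N N \<Longrightarrow>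
  (X1 - X2) * Y = X1 * Y - X2 * Y"
  by (rule minus_mult_distrib_mat)
lemma d3[simp]: "(X :: complex mat) \<in> carrier_mat N N \<Longrightarrow> Y \<in> carrier_mat N N \<Longrightarrow>
  X * (c \<cdot>\<^sub>m Y) = c \<cdot>\<^sub>m (X * Y)"
  by (rule mult_smult_distrib)
lemma d4[simp]: "(X :: complex mat) \<in> carrier_mat N N \<Longrightarrow> Y \<in> carrier_mat N N \<Longrightarrow>
  (c \<cdot>\<^sub>m X) * Y = c \<cdot>\<^sub>m (X * Y)"
  by (rule mult_smult_assoc_mat)
lemma trm[simp]: "(X :: complex mat) \<in> carrier_mat N N \<Longrightarrow> Y \<in> carrier_mat N N \<Longrightarrow>
  mat_trace (X - Y) = mat_trace X - mat_trace Y"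
  by (simp add: mat_trace_def sum_subtractf)
lemma trs[simp]: "(X :: complex mat) \<in> carrier_mat N N \<Longrightarrow>
  mat_trace (c \<cdot>\<^sub>m X) = c * mat_trace X"
  by (simp add: mat_trace_def sum_distrib_left)

lemma w_BA[simp]: "mat_trace (B * A) = t1"
  using tc[of B A] by simp
lemma w_ABA[simp]: "mat_trace (A * (B * A)) = t1"
  using tc[of A "B * A"] by simp
lemma w_BAB[simp]: "mat_trace (B * (A * B)) = t1"
  using tc[of B "A * B"] by simp
lemma w_BABA[simp]: "mat_trace (B * (A * (B * A))) = t2"
  using tc[of B "A * (B * A)"] by simp
lemma w_ABABA[simp]: "mat_trace (A * (B * (A * (B * A)))) = t2"
  using tc[of A "B * (A * (B * A))"] by simp
lemma w_BABAB[simp]: "mat_trace (B * (A * (B * (A * B)))) = t2"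
  using tc[of B "A * (B * (A * B))"] by simp
lemma w_BABABA[simp]: "mat_trace (B * (A * (B * (A * (B * A))))) = t3"
  using tc[of B "A * (B * (A * (B * A)))"] by simp

lemma part_a:
  assumes h: "c \<cdot>\<^sub>m (A * B * A - B * A * B) = A - B"
  shows "(a - t1) * (t2 - t3) - (t1 - t2)^2 = 0"
proof -
  have XC: "A * B * A - B * A * B \<in> carrier_mat N N" by simp
  have "mat_trace (A * (c \<cdot>\<^sub>m (A * B * A - B * A * B))) = mat_trace (A * (A - B))" using h by simp
  then have e1: "c * (t1 - t2) = a - t1"
    by simp
  have "mat_trace ((A * B * A) * (c \<cdot>\<^sub>m (A * B * A - B * A * B))) = mat_trace ((A * B * A) * (A - B))" using h by simp
  then have e2: "c * (t2 - t3) = t1 - t2"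
    by simp
  have "(a - t1) * (t2 - t3) = c * (t1 - t2) * (t2 - t3)" using e1 by simp
  also have "\<dots> = (t1 - t2) * (c * (t2 - t3))" by (simp only: mult.assoc mult.left_commute)
  also have "\<dots> = (t1 - t2)^2" using e2 by (simp add: power2_eq_square)
  finally show ?thesis by simp
qed


lemma hs[simp]: "(X :: complex mat) \<in> carrier_mat N N \<Longrightarrow> hadj (complex_of_real q \<cdot>\<^sub>m X) = complex_of_real q \<cdot>\<^sub>m hadj X"
  by (rule hadj_smult_real)

lemma hX: "hadj (A * B * A - B * A * B) = A * B * A - B * A * B"
  by simp

lemma part_b:
  assumes trB: "mat_trace B = a"
    and F: "(a - t1) * (t2 - t3) - (t1 - t2)^2 = 0"
    and nc: "A * B \<noteq> B * A"
  shows "\<exists>Q::real. Q > 0 \<and> complex_of_real (Q^2) = (a - t1) / (t1 - t2) \<and>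
           complex_of_real (Q^2) \<cdot>\<^sub>m (A * B * A - B * A * B) = A - B"
proof -
  define Z where "Z = B * A - A * (B * A)"
  have Zc: "Z \<in> carrier_mat N N" unfolding Z_def by simp
  have "mat_trace (hadj Z * Z) = t1 - t2" unfolding Z_def by simp
  then obtain u where u0: "u \<ge> 0" and tu: "t1 - t2 = complex_of_real u" and uz: "u = 0 \<longrightarrow> Z = 0\<^sub>m N N"
    using frob[OF Zc] by metis
  have "u \<noteq> 0"
  proof
    assume "u = 0"
    then have "Z = 0\<^sub>m N N" using uz by simp
    then have e: "B * A = A * (B * A)" unfolding Z_def by (rule mat_minus_eq0[rotated 2]) simp_all
    then have "hadj (B * A) = hadj (A * (B * A))" by simp
    then have "A * B = A * (B * A)" by simp
    then show False using e nc by simp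
  qed
  with u0 have upos: "u > 0" by simp
  define Y where "Y = A - B * A"
  have Yc: "Y \<in> carrier_mat N N" unfolding Y_def by simp
  have "mat_trace (hadj Y * Y) = a - t1" unfolding Y_def by simp
  then obtain v where v0: "v \<ge> 0" and tv: "a - t1 = complex_of_real v" and vz: "v = 0 \<longrightarrow> Y = 0\<^sub>m N N"
    using frob[OF Yc] by metis
  have "v \<noteq> 0"
  proof
    assume "v = 0"
    then have "Y = 0\<^sub>m N N" using vz by simp
    then have e: "A = B * A" unfolding Y_def by (rule mat_minus_eq0[rotated 2]) simp_all
    then have "hadj A = hadj (B * A)" by simp
    then have "A = A * B" by simp
    then show False using e nc by simp
  qed
  with v0 have vpos: "v > 0" by simp
  define q where "q = v / u"
  define Q where "Q = sqrt q"
  have qpos: "q > 0" unfolding q_def using upos vpos by simp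
  have QQ: "Q^2 = q" unfolding Q_def using qpos by simp
  have Qpos: "Q > 0" unfolding Q_def using qpos by simp
  have qc: "complex_of_real q = (a - t1) / (t1 - t2)" unfolding q_def using tu tv by simp
  define X where "X = A * B * A - B * A * B"
  define D where "D = A - B"
  have Xc: "X \<in> carrier_mat N N" and Dc: "D \<in> carrier_mat N N" unfolding X_def D_def by simp_all
  define M where "M = complex_of_real q \<cdot>\<^sub>m X - D"
  have Mc: "M \<in> carrier_mat N N" unfolding M_def using Xc Dc by simp
  have hM: "hadj M = M" unfolding M_def X_def D_def by simp
  have trXX: "mat_trace (X * X) = 2 * t2 - 2 * t3" unfolding X_def by simp
  have trXD: "mat_trace (X * D) = 2 * t1 - 2 * t2" unfolding X_def D_def by simp
  have trDX: "mat_trace (D * X) = 2 * t1 - 2 * t2" unfolding X_def D_def by simp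
  have trDD: "mat_trace (D * D) = 2 * a - 2 * t1" unfolding D_def using trB by simp
  define cq where "cq = complex_of_real q"
  have "mat_trace (hadj M * M) = mat_trace (M * M)" using hM by simp
  also have "\<dots> = cq * cq * mat_trace (X * X) - cq * mat_trace (X * D) - cq * mat_trace (D * X) + mat_trace (D * D)"
    unfolding M_def cq_def using Xc Dc by (simp add: right_diff_distrib mult.assoc)
  also have "\<dots> = 2 * (cq * cq * (t2 - t3) - 2 * cq * (t1 - t2) + (a - t1))"
    unfolding trXX trXD trDX trDD by (simp add: algebra_simps)
  also have "\<dots> = 0"
  proof -
    have u: "t1 - t2 \<noteq> 0" using tu upos by simp
    have cq: "cq = (a - t1) / (t1 - t2)" unfolding cq_def using qc .
    have F': "(a - t1) * (t2 - t3) = (t1 - t2)^2" using F by simp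
    have "cq * cq * (t2 - t3) = (a - t1) * ((a - t1) * (t2 - t3)) / ((t1 - t2) * (t1 - t2))"
      unfolding cq by (simp add: field_simps)
    also have "\<dots> = (a - t1) * ((t1 - t2) * (t1 - t2)) / ((t1 - t2) * (t1 - t2))"
      unfolding F' by (simp add: power2_eq_square)
    also have "\<dots> = a - t1" using u by (intro nonzero_mult_div_cancel_right) simp
    finally have 1: "cq * cq * (t2 - t3) = a - t1" .
    have 2: "cq * (t1 - t2) = a - t1" unfolding cq using u by simp
    show ?thesis using 1 2 by simp
  qed
  finally have "mat_trace (hadj M * M) = 0" .
  then obtain r where "r \<ge> 0" "mat_trace (hadj M * M) = complex_of_real r" "r = 0 \<longrightarrow> M = 0\<^sub>m N N"
    using frob[OF Mc] by metis
  then have "M = 0\<^sub>m N N" using \<open>mat_trace (hadj M * M) = 0\<close> by simp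
  then have "complex_of_real q \<cdot>\<^sub>m X = D" unfolding M_def
    by (rule mat_minus_eq0[rotated 2]) (use Xc Dc in simp_all)
  then show ?thesis using Qpos QQ qc unfolding X_def D_def by (intro exI[of _ Q]) simp
qed

end

lemma hadj_kron:
  "hadj (kron A B) = kron (hadj A) (hadj B)"
proof (rule eq_matI)
  fix i j assume i: "i < dim_row (kron (hadj A) (hadj B))" and j: "j < dim_col (kron (hadj A) (hadj B))"
  have i': "i < dim_col A * dim_col B" and j': "j < dim_row A * dim_row B" using i j by (simp_all add: hadj_def)
  have ic: "i div dim_col B < dim_col A" "i mod dim_col B < dim_col B" using div_mod_lt[OF i'] by auto
  have jr: "j div dim_row B < dim_row A" "j mod dim_row B < dim_row B" using div_mod_lt[OF j'] by auto
  show "hadj (kron A B) $$ (i, j) = kron (hadj A) (hadj B) $$ (i, j)"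
    using i' j' ic jr by (simp add: hadj_def)
qed (simp_all add: hadj_def)

lemma hadj_one: "hadj (1\<^sub>m n) = 1\<^sub>m n"
  by (rule eq_matI) (auto simp: hadj_def)

theorem proposition1:
  fixes n r :: nat and P :: "complex mat"
  assumes n2: "n \<ge> 2"
    and Pdim: "P \<in> carrier_mat (n^2) (n^2)"
    and Pherm: "mat_adjoint P = P"
    and Pidem: "P * P = P"
    and Prank: "vec_space.rank (n^2) P = r"
  defines "P1 \<equiv> kron P (1\<^sub>m n)"
    and "P2 \<equiv> kron (1\<^sub>m n) P"
  defines "t \<equiv> (\<lambda>m::nat. mat_trace ((P1 * P2) ^\<^sub>m m))"
  defines "F \<equiv> (of_nat (r * n) - t 1) * (t 2 - t 3) - (t 1 - t 2)^2"
  shows "((\<exists>Q::real. Q > 0 \<and>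
             (complex_of_real (Q^2)) \<cdot>\<^sub>m (P1 * P2 * P1 - P2 * P1 * P2) = P1 - P2)
           \<longrightarrow> F = 0)
       \<and> ((F = 0 \<and> P1 * P2 \<noteq> P2 * P1) \<longrightarrow>
           (\<exists>Q::real. Q > 0 \<and>
             complex_of_real (Q^2) = (of_nat (r * n) - t 1) / (t 1 - t 2) \<and>
             (complex_of_real (Q^2)) \<cdot>\<^sub>m (P1 * P2 * P1 - P2 * P1 * P2) = P1 - P2))"
proof -
  define N where "N = n^2 * n"
  have I: "1\<^sub>m n \<in> carrier_mat n n" by simp
  have P1c: "P1 \<in> carrier_mat N N" unfolding P1_def N_def by (rule carrier_matI) (use Pdim in simp_all)
  have P2c: "P2 \<in> carrier_mat N N" unfolding P2_def N_def by (rule carrier_matI) (use Pdim in \<open>simp_all add: mult.commute\<close>)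
  have P11: "P1 * P1 = P1" unfolding P1_def using kron_mult[OF Pdim I Pdim I] Pidem by simp
  have P22: "P2 * P2 = P2" unfolding P2_def using kron_mult[OF I Pdim I Pdim] Pidem by simp
  have hP: "hadj P = P" using Pherm mat_adjoint_hadj by simp
  have hP1: "hadj P1 = P1" unfolding P1_def by (simp add: hadj_kron hP hadj_one)
  have hP2: "hadj P2 = P2" unfolding P2_def by (simp add: hadj_kron hP hadj_one)
  interpret T: twop N P1 P2
    by unfold_locales (use P1c P2c P11 P22 hP1 hP2 in auto)
  have trP: "mat_trace P = of_nat r" using rank_idem_trace[OF Pdim Pidem] Prank by simp
  have trI: "mat_trace (1\<^sub>m n :: complex mat) = of_nat n" by (rule trace_one)
  have "mat_trace P1 = of_nat (r * n)" unfolding P1_def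
    using trace_kron[OF Pdim I] trP trI by simp
  then have a: "T.a = of_nat (r * n)" using T.w_A by simp
  have trB: "mat_trace P2 = T.a" unfolding a P2_def
    using trace_kron[OF I Pdim] trP trI by (simp add: mult.commute)
  have PP: "P1 * P2 \<in> carrier_mat N N" using P1c P2c by simp
  have e1: "t 1 = T.t1" unfolding t_def T.t1_def using PP by simp
  have e2: "t 2 = T.t2" unfolding t_def T.t2_def using PP P1c P2c by (simp add: numeral_2_eq_2)
  have e3: "t 3 = T.t3" unfolding t_def T.t3_def using PP P1c P2c by (simp add: numeral_3_eq_3)
  show ?thesis
  proof (intro conjI impI)
    assume "\<exists>Q::real. Q > 0 \<and> (complex_of_real (Q^2)) \<cdot>\<^sub>m (P1 * P2 * P1 - P2 * P1 * P2) = P1 - P2"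
    then obtain Q :: real where "(complex_of_real (Q^2)) \<cdot>\<^sub>m (P1 * P2 * P1 - P2 * P1 * P2) = P1 - P2" by blast
    from T.part_a[OF this] show "F = 0" unfolding F_def e1 e2 e3 a[symmetric] .
  next
    assume h: "F = 0 \<and> P1 * P2 \<noteq> P2 * P1"
    have "(T.a - T.t1) * (T.t2 - T.t3) - (T.t1 - T.t2)^2 = 0" using h unfolding F_def e1 e2 e3 a[symmetric] by simp
    from T.part_b[OF trB this] h
    show "\<exists>Q::real. Q > 0 \<and>
             complex_of_real (Q^2) = (of_nat (r * n) - t 1) / (t 1 - t 2) \<and>
             (complex_of_real (Q^2)) \<cdot>\<^sub>m (P1 * P2 * P1 - P2 * P1 * P2) = P1 - P2"
      unfolding e1 e2 a[symmetric] by simp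
  qed
qed

end
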